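(* Let $n\geq 2$ and let $M=(M_{ij})_{1\le i,j\le n}$ be an $n\times n$ matrix of integers with $M_{ij}>0$ for all $i,j$, $M_{11}=1$, and $M_{ii}>1$ for all $i\in\{2,\dots,n\}$. Then $\mathrm{Cat}(M)\neq\emptyset$ if and only if $M_{ii}>M_{1i}M_{i1}$ for all $i\in\{2,\dots,n\}$ and $M_{ij}\geq M_{i1}M_{1j}$ for all $i,j\in\{2,\dots,n\}$.
   Context: For an $n\times n$ matrix $M=(m_{ij})$ with entries in the natural numbers, $\mathrm{Cat}(M)$ denotes the collection of categories $A$ with exactly $n$ distinct objects $x_1,\dots,x_n$ such that $|A(x_i,x_j)|=m_{ij}$ for all $i,j$, where $A(x_i,x_j)$ is the set of morphisms from $x_i$ to $x_j$. *)

theory Defs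
  imports Main
begin

text \<open>A (small) category whose objects are 0, ..., n-1 (object i corresponds to x_(i+1)).\<close>

definition is_category ::
  "nat \<Rightarrow> (nat \<Rightarrow> nat \<Rightarrow> 'm set) \<Rightarrow> (nat \<Rightarrow> nat \<Rightarrow> nat \<Rightarrow> 'm \<Rightarrow> 'm \<Rightarrow> 'm) \<Rightarrow> (nat \<Rightarrow> 'm) \<Rightarrow> bool"
where
  "is_category n Hom cmp ident \<longleftrightarrow>
     (\<forall>i<n. ident i \<in> Hom i i) \<and>
     (\<forall>i<n. \<forall>j<n. \<forall>k<n. \<forall>f\<in>Hom i j. \<forall>g\<in>Hom j k. cmp i j k g f \<in> Hom i k) \<and>
     (\<forall>i<n. \<forall>j<n. \<forall>k<n. \<forall>l<n. \<forall>f\<in>Hom i j. \<forall>g\<in>Hom j k. \<forall>h\<in>Hom k l.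
        cmp i k l h (cmp i j k g f) = cmp i j l (cmp j k l h g) f) \<and>
     (\<forall>i<n. \<forall>j<n. \<forall>f\<in>Hom i j. cmp i j j (ident j) f = f \<and> cmp i i j f (ident i) = f)"

text \<open>Cat(M) is nonempty: there is a category with objects 0..n-1 and |Hom i j| = M i j.
  Since all hom-sets are finite, morphisms may w.l.o.g. be taken to be natural numbers.\<close>

definition Cat_nonempty :: "nat \<Rightarrow> (nat \<Rightarrow> nat \<Rightarrow> nat) \<Rightarrow> bool" where
  "Cat_nonempty n M \<longleftrightarrow>
     (\<exists>(Hom :: nat \<Rightarrow> nat \<Rightarrow> nat set) cmp ident.
        is_category n Hom cmp ident \<and>
        (\<forall>i<n. \<forall>j<n. finite (Hom i j) \<and> card (Hom i j) = M i j))"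

end

theory Submission
  imports Defs
begin

lemma fac_bound:
  fixes a b A B :: nat
  assumes "a < A" "b < B"
  shows "a * B + b < A * B"
proof -
  have "a * B + b < a * B + B" using assms by simp
  also have "\<dots> = (a + 1) * B" by simp
  also have "\<dots> \<le> A * B" using assms by (intro mult_right_mono) auto
  finally show ?thesis .
qed

lemma necessity:
  assumes cat: "is_category n Hom cmp ident"
    and fin: "\<forall>i<n. \<forall>j<n. finite (Hom i j) \<and> card (Hom i j) = M i j"
    and pos: "\<forall>i<n. \<forall>j<n. M i j > 0"
    and M00: "M 0 0 = 1"
    and Mii: "\<forall>i. 1 \<le> i \<and> i < n \<longrightarrow> M i i > 1"
    and i: "1 \<le> i" "i < n" and j: "1 \<le> j" "j < n"
  shows "M i j \<ge> M i 0 * M 0 j \<and> (i = j \<longrightarrow> M i j > M i 0 * M 0 j)"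
proof -
  have n0: "0 < n" using i by simp
  note C = cat[unfolded is_category_def]
  note idm = C[THEN conjunct1, rule_format]
  note cl = C[THEN conjunct2, THEN conjunct1, rule_format]
  note as = C[THEN conjunct2, THEN conjunct2, THEN conjunct1, rule_format]
  note idl = C[THEN conjunct2, THEN conjunct2, THEN conjunct2, rule_format, THEN conjunct1]
  note idr = C[THEN conjunct2, THEN conjunct2, THEN conjunct2, rule_format, THEN conjunct2]
  have H00: "Hom 0 0 = {ident 0}"
  proof -
    have "finite (Hom 0 0)" "card (Hom 0 0) = 1" using fin M00 n0 by auto
    then obtain x where "Hom 0 0 = {x}" using card_1_singletonE by blast
    with idm[OF n0] show ?thesis by auto
  qed
  have ne: "\<And>a b. a < n \<Longrightarrow> b < n \<Longrightarrow> Hom a b \<noteq> {}"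
    using fin pos by (metis card.empty less_irrefl)
  obtain bj where bj: "bj \<in> Hom j 0" using ne[OF j(2) n0] by blast
  obtain ai where ai: "ai \<in> Hom 0 i" using ne[OF n0 i(2)] by blast
  define F where "F = (\<lambda>(f, g). cmp i 0 j g f)"
  have inj: "inj_on F (Hom i 0 \<times> Hom 0 j)"
  proof (rule inj_onI, clarsimp simp: F_def)
    fix f g f' g'
    assume f: "f \<in> Hom i 0" and g: "g \<in> Hom 0 j" and f': "f' \<in> Hom i 0" and g': "g' \<in> Hom 0 j"
      and eq: "cmp i 0 j g f = cmp i 0 j g' f'"
    have rf: "\<And>f g. f \<in> Hom i 0 \<Longrightarrow> g \<in> Hom 0 j \<Longrightarrow> cmp i j 0 bj (cmp i 0 j g f) = f"
    proof -
      fix f g assume f: "f \<in> Hom i 0" and g: "g \<in> Hom 0 j"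
      have "cmp i j 0 bj (cmp i 0 j g f) = cmp i 0 0 (cmp 0 j 0 bj g) f"
        using as[OF i(2) n0 j(2) n0 f g bj] .
      also have "cmp 0 j 0 bj g = ident 0" using cl[OF n0 j(2) n0 g bj] H00 by auto
      finally show "cmp i j 0 bj (cmp i 0 j g f) = f" using idl[OF i(2) n0 f] by simp
    qed
    have rg: "\<And>f g. f \<in> Hom i 0 \<Longrightarrow> g \<in> Hom 0 j \<Longrightarrow> cmp 0 i j (cmp i 0 j g f) ai = g"
    proof -
      fix f g assume f: "f \<in> Hom i 0" and g: "g \<in> Hom 0 j"
      have "cmp 0 0 j g (cmp 0 i 0 f ai) = cmp 0 i j (cmp i 0 j g f) ai"
        using as[OF n0 i(2) n0 j(2) ai f g] .
      moreover have "cmp 0 i 0 f ai = ident 0" using cl[OF n0 i(2) n0 ai f] H00 by auto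
      ultimately show "cmp 0 i j (cmp i 0 j g f) ai = g" using idr[OF n0 j(2) g] by simp
    qed
    have "f = f'" using rf[OF f g] rf[OF f' g'] eq by simp
    moreover have "g = g'" using rg[OF f g] rg[OF f' g'] eq by simp
    ultimately show "f = f' \<and> g = g'" by simp
  qed
  have img: "F ` (Hom i 0 \<times> Hom 0 j) \<subseteq> Hom i j"
    using cl[OF i(2) n0 j(2)] by (auto simp: F_def)
  have cp: "card (Hom i 0 \<times> Hom 0 j) = M i 0 * M 0 j"
    using fin i j n0 by (simp add: card_cartesian_product)
  have finij: "finite (Hom i j)" using fin i j by simp
  have le: "M i 0 * M 0 j \<le> M i j"
    using card_inj_on_le[OF inj img finij] cp fin i j by simp
  moreover have "M i 0 * M 0 j < M i j" if ij: "i = j"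
  proof -
    have notin: "ident i \<notin> F ` (Hom i 0 \<times> Hom 0 j)"
    proof
      assume "ident i \<in> F ` (Hom i 0 \<times> Hom 0 j)"
      then obtain f g where f: "f \<in> Hom i 0" and g: "g \<in> Hom 0 i" and gf: "ident i = cmp i 0 i g f"
        using ij by (auto simp: F_def)
      have all: "h = ident i" if h: "h \<in> Hom i i" for h
      proof -
        define k where "k = cmp i i 0 f h"
        have k: "k \<in> Hom i 0" using cl[OF i(2) i(2) n0 h f] k_def by simp
        have "h = cmp i i i (cmp i 0 i g f) h" using idl[OF i(2) i(2) h] gf by simp
        also have "\<dots> = cmp i 0 i g k" using as[OF i(2) i(2) n0 i(2) h f g] k_def by simp
        finally have hk: "h = cmp i 0 i g k" .
        have "k = cmp i i 0 k (cmp i 0 i g f)" using idr[OF i(2) n0 k] gf by simp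
        also have "\<dots> = cmp i 0 0 (cmp 0 i 0 k g) f" using as[OF i(2) n0 i(2) n0 f g k] .
        also have "cmp 0 i 0 k g = ident 0" using cl[OF n0 i(2) n0 g k] H00 by auto
        finally have "k = f" using idl[OF i(2) n0 f] by simp
        with hk gf show ?thesis by simp
      qed
      have "Hom i i \<subseteq> {ident i}" using all by auto
      hence "card (Hom i i) \<le> card {ident i}" by (intro card_mono) auto
      hence "card (Hom i i) \<le> 1" by simp
      with fin Mii i show False by fastforce
    qed
    have img2: "F ` (Hom i 0 \<times> Hom 0 j) \<subseteq> Hom i j - {ident i}" using img notin by blast
    have "card (Hom i 0 \<times> Hom 0 j) \<le> card (Hom i j - {ident i})"
      using card_inj_on_le[OF inj img2] finij by simp
    also have "\<dots> = M i j - 1" using idm[OF i(2)] ij fin i by simp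
    finally have "M i 0 * M 0 j \<le> M i j - 1" using cp by simp
    moreover have "0 < M i j" using pos i j by simp
    ultimately show ?thesis by linarith
  qed
  ultimately show ?thesis by blast
qed

definition isid :: "(nat \<Rightarrow> nat \<Rightarrow> nat) \<Rightarrow> nat \<Rightarrow> nat \<Rightarrow> nat \<Rightarrow> bool" where
  "isid M i j x \<longleftrightarrow> i \<noteq> 0 \<and> i = j \<and> x = M i i - 1"
definition LL :: "(nat \<Rightarrow> nat \<Rightarrow> nat) \<Rightarrow> nat \<Rightarrow> nat \<Rightarrow> nat \<Rightarrow> nat" where
  "LL M i j x = (if x < M i 0 * M 0 j then x div M 0 j else 0)"
definition RR :: "(nat \<Rightarrow> nat \<Rightarrow> nat) \<Rightarrow> nat \<Rightarrow> nat \<Rightarrow> nat \<Rightarrow> nat" where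
  "RR M i j x = (if x < M i 0 * M 0 j then x mod M 0 j else 0)"
definition fac :: "(nat \<Rightarrow> nat \<Rightarrow> nat) \<Rightarrow> nat \<Rightarrow> nat \<Rightarrow> nat \<Rightarrow> nat \<Rightarrow> nat" where
  "fac M i k a b = a * M 0 k + b"
definition ccmp :: "(nat \<Rightarrow> nat \<Rightarrow> nat) \<Rightarrow> nat \<Rightarrow> nat \<Rightarrow> nat \<Rightarrow> nat \<Rightarrow> nat \<Rightarrow> nat" where
  "ccmp M i j k g f = (if isid M i j f then g else if isid M j k g then f
      else fac M i k (LL M i j f) (RR M j k g))"
definition cid :: "(nat \<Rightarrow> nat \<Rightarrow> nat) \<Rightarrow> nat \<Rightarrow> nat" where
  "cid M i = (if i = 0 then 0 else M i i - 1)"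

lemma sufficiency:
  assumes pos: "\<forall>i<n. \<forall>j<n. M i j > 0"
    and M00: "M 0 0 = 1"
    and strict: "\<forall>i. 1 \<le> i \<and> i < n \<longrightarrow> M i i > M 0 i * M i 0"
    and weak: "\<forall>i j. 1 \<le> i \<and> i < n \<and> 1 \<le> j \<and> j < n \<longrightarrow> M i j \<ge> M i 0 * M 0 j"
  shows "is_category n (\<lambda>i j. {0..<M i j}) (ccmp M) (cid M)"
proof -
  have n0: "0 < n" if "i < n" for i using that by simp
  have le: "M i 0 * M 0 k \<le> M i k" if "i < n" "k < n" for i k
  proof (cases "i = 0 \<or> k = 0")
    case True thus ?thesis using M00 by auto
  next
    case False thus ?thesis using weak that by simp
  qed
  have nid: "\<not> isid M i k x" if "x < M i 0 * M 0 k" "i < n" for i k x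
  proof
    assume "isid M i k x"
    hence "i \<noteq> 0" "k = i" "x = M i i - 1" unfolding isid_def by auto
    moreover have "M 0 i * M i 0 < M i i" using strict that \<open>i \<noteq> 0\<close> by simp
    ultimately show False using that by (simp add: mult.commute)
  qed
  have Lb: "LL M i j x < M i 0" if "i < n" "j < n" for i j x
  proof (cases "x < M i 0 * M 0 j")
    case True thus ?thesis unfolding LL_def by (simp add: less_mult_imp_div_less)
  next
    case False thus ?thesis unfolding LL_def using pos that n0[OF that(1)] by simp
  qed
  have Rb: "RR M i j x < M 0 j" if "i < n" "j < n" for i j x
    unfolding RR_def using pos that n0[OF that(1)] by simp
  have facb: "fac M i k a b < M i 0 * M 0 k" if "a < M i 0" "b < M 0 k" for i k a b
    unfolding fac_def using fac_bound[OF that] .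
  have Lfac: "LL M i k (fac M i k a b) = a" if "a < M i 0" "b < M 0 k" for i k a b
    using facb[OF that] that unfolding LL_def fac_def by simp
  have Rfac: "RR M i k (fac M i k a b) = b" if "a < M i 0" "b < M 0 k" for i k a b
    using facb[OF that] that unfolding RR_def fac_def by simp
  have cmpfac: "ccmp M i j k g f = fac M i k (LL M i j f) (RR M j k g)"
    if "\<not> isid M i j f" "\<not> isid M j k g" for i j k f g
    using that unfolding ccmp_def by simp
  have clos: "ccmp M i j k g f \<in> {0..<M i k}"
    if "i<n" "j<n" "k<n" "f \<in> {0..<M i j}" "g \<in> {0..<M j k}" for i j k f g
  proof -
    consider "isid M i j f" | "\<not> isid M i j f" "isid M j k g" | "\<not> isid M i j f" "\<not> isid M j k g" by blast
    thus ?thesis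
    proof cases
      case 1 thus ?thesis using that unfolding ccmp_def isid_def by auto
    next
      case 2 thus ?thesis using that unfolding ccmp_def isid_def by auto
    next
      case 3
      have "fac M i k (LL M i j f) (RR M j k g) < M i 0 * M 0 k"
        using facb Lb Rb that by blast
      thus ?thesis using cmpfac[OF 3] le[OF that(1,3)] by simp
    qed
  qed
  have ident: "cid M i \<in> {0..<M i i}" if "i < n" for i
    using pos that M00 unfolding cid_def by auto
  have idl: "ccmp M i j j (cid M j) f = f" if "i<n" "j<n" "f \<in> {0..<M i j}" for i j f
  proof (cases "j = 0")
    case True
    have "\<not> isid M i j f" "\<not> isid M j j (cid M j)" using True unfolding isid_def by auto
    hence "ccmp M i j j (cid M j) f = fac M i j (LL M i j f) (RR M j j (cid M j))" by (rule cmpfac)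
    also have "\<dots> = f" using True that M00 unfolding fac_def LL_def RR_def cid_def by simp
    finally show ?thesis .
  next
    case False
    thus ?thesis unfolding ccmp_def isid_def cid_def by auto
  qed
  have idr: "ccmp M i i j f (cid M i) = f" if "i<n" "j<n" "f \<in> {0..<M i j}" for i j f
  proof (cases "i = 0")
    case True
    have "\<not> isid M i i (cid M i)" "\<not> isid M i j f" using True unfolding isid_def by auto
    hence "ccmp M i i j f (cid M i) = fac M i j (LL M i i (cid M i)) (RR M i j f)" by (rule cmpfac)
    also have "\<dots> = f" using True that M00 unfolding fac_def LL_def RR_def cid_def by simp
    finally show ?thesis .
  next
    case False
    thus ?thesis unfolding ccmp_def isid_def cid_def by auto
  qed
  have assoc: "ccmp M i k l h (ccmp M i j k g f) = ccmp M i j l (ccmp M j k l h g) f"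
    if "i<n" "j<n" "k<n" "l<n" "f \<in> {0..<M i j}" "g \<in> {0..<M j k}" "h \<in> {0..<M k l}"
    for i j k l f g h
  proof -
    consider "isid M i j f" | "\<not> isid M i j f" "isid M j k g"
      | "\<not> isid M i j f" "\<not> isid M j k g" "isid M k l h"
      | "\<not> isid M i j f" "\<not> isid M j k g" "\<not> isid M k l h" by blast
    thus ?thesis
    proof cases
      case 1
      hence "i = j" by (simp add: isid_def)
      thus ?thesis using 1 unfolding ccmp_def by simp
    next
      case 2
      hence "j = k" by (simp add: isid_def)
      thus ?thesis using 2 unfolding ccmp_def by simp
    next
      case 3
      hence kl: "k = l" by (simp add: isid_def)
      define c where "c = ccmp M i j k g f"
      have "ccmp M i k l h c = c"
        using 3 kl unfolding ccmp_def isid_def by auto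
      moreover have "ccmp M j k l h g = g" using 3 kl unfolding ccmp_def by simp
      ultimately show ?thesis unfolding c_def using kl by simp
    next
      case 4
      define a where "a = LL M i j f"
      define b where "b = RR M j k g"
      have a: "a < M i 0" unfolding a_def using Lb that by blast
      have b: "b < M 0 k" unfolding b_def using Rb that by blast
      have c: "ccmp M i j k g f = fac M i k a b" unfolding a_def b_def using cmpfac 4 by blast
      have cn: "\<not> isid M i k (fac M i k a b)" using nid facb[OF a b] that(1) by blast
      have "ccmp M i k l h (ccmp M i j k g f) = fac M i l a (RR M k l h)"
        using c cmpfac[OF cn 4(3)] Lfac[OF a b] by simp
      define b2 where "b2 = LL M j k g"
      have b2: "b2 < M j 0" unfolding b2_def using Lb that by blast
      have r: "RR M k l h < M 0 l" using Rb that by blast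
      have d: "ccmp M j k l h g = fac M j l b2 (RR M k l h)" unfolding b2_def using cmpfac 4 by blast
      have dn: "\<not> isid M j l (fac M j l b2 (RR M k l h))" using nid facb[OF b2 r] that(2) by blast
      have "ccmp M i j l (ccmp M j k l h g) f = fac M i l a (RR M k l h)"
        using d cmpfac[OF 4(1) dn] Rfac[OF b2 r] a_def by simp
      thus ?thesis using \<open>ccmp M i k l h (ccmp M i j k g f) = fac M i l a (RR M k l h)\<close> by simp
    qed
  qed
  show ?thesis unfolding is_category_def
  proof (intro conjI)
    show "\<forall>i<n. cid M i \<in> {0..<M i i}" using ident by blast
    show "\<forall>i<n. \<forall>j<n. \<forall>k<n. \<forall>f\<in>{0..<M i j}. \<forall>g\<in>{0..<M j k}. ccmp M i j k g f \<in> {0..<M i k}"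
      apply (intro allI impI ballI) apply (rule clos) apply assumption+ done
    show "\<forall>i<n. \<forall>j<n. \<forall>k<n. \<forall>l<n. \<forall>f\<in>{0..<M i j}. \<forall>g\<in>{0..<M j k}. \<forall>h\<in>{0..<M k l}.
        ccmp M i k l h (ccmp M i j k g f) = ccmp M i j l (ccmp M j k l h g) f"
      apply (intro allI impI ballI) apply (rule assoc) apply assumption+ done
    show "\<forall>i<n. \<forall>j<n. \<forall>f\<in>{0..<M i j}. ccmp M i j j (cid M j) f = f \<and> ccmp M i i j f (cid M i) = f"
      apply (intro allI impI ballI conjI) apply (rule idl) apply assumption+ apply (rule idr) apply assumption+ done
  qed
qed

theorem mainTheorem6:
  fixes n :: nat and M :: "nat \<Rightarrow> nat \<Rightarrow> nat"
  assumes "n \<ge> 2"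
    and "\<forall>i<n. \<forall>j<n. M i j > 0"
    and "M 0 0 = 1"
    and "\<forall>i. 1 \<le> i \<and> i < n \<longrightarrow> M i i > 1"
  shows "Cat_nonempty n M \<longleftrightarrow>
           (\<forall>i. 1 \<le> i \<and> i < n \<longrightarrow> M i i > M 0 i * M i 0) \<and>
           (\<forall>i j. 1 \<le> i \<and> i < n \<and> 1 \<le> j \<and> j < n \<longrightarrow> M i j \<ge> M i 0 * M 0 j)"
proof
  assume "Cat_nonempty n M"
  then obtain Hom :: "nat \<Rightarrow> nat \<Rightarrow> nat set" and cmp ident where
    cat: "is_category n Hom cmp ident" and fin: "\<forall>i<n. \<forall>j<n. finite (Hom i j) \<and> card (Hom i j) = M i j"
    unfolding Cat_nonempty_def by blast
  note N = necessity[OF cat fin assms(2,3,4)]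
  show "(\<forall>i. 1 \<le> i \<and> i < n \<longrightarrow> M i i > M 0 i * M i 0) \<and>
           (\<forall>i j. 1 \<le> i \<and> i < n \<and> 1 \<le> j \<and> j < n \<longrightarrow> M i j \<ge> M i 0 * M 0 j)"
  proof (intro conjI allI impI)
    fix i assume "1 \<le> i \<and> i < n"
    thus "M i i > M 0 i * M i 0" using N[of i i] by (simp add: mult.commute)
  next
    fix i j assume "1 \<le> i \<and> i < n \<and> 1 \<le> j \<and> j < n"
    thus "M i j \<ge> M i 0 * M 0 j" using N[of i j] by simp
  qed
next
  assume "(\<forall>i. 1 \<le> i \<and> i < n \<longrightarrow> M i i > M 0 i * M i 0) \<and>
           (\<forall>i j. 1 \<le> i \<and> i < n \<and> 1 \<le> j \<and> j < n \<longrightarrow> M i j \<ge> M i 0 * M 0 j)"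
  hence "is_category n (\<lambda>i j. {0..<M i j}) (ccmp M) (cid M)"
    using sufficiency[OF assms(2,3)] by blast
  thus "Cat_nonempty n M" unfolding Cat_nonempty_def by fastforce
qed

end
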